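(* Let $T>0$, $a\ge0$, and let $y$ be a non-negative, continuous, non-decreasing function on $[0,T)$. Let $F$ be a non-negative continuous function on $[2,+\infty)\times\mathbb{R}_+$ which is increasing with respect to its second variable. Assume that for every $0<t_0<t_1<T$ and every $p\in[2,+\infty)$, $$y(t_1)-y(t_0)\le a(t_1-t_0)+\int_{t_0}^{t_1}F(p,y(s))\,ds.$$ Let $\mu:\mathbb{R}_+\to\mathbb{R}_+$ be continuous, and assume that for every $x\ge0$ there exists $p_x\in[2,+\infty)$ such that $F(p_x,x)\le\mu(x)$. Then for all $0<t<T$, $$y(t)-y(0)\le at+\int_0^t\mu(y(s))\,ds.$$ *)

theory Defs
  imports "HOL-Analysis.Analysis"
begin

end

theory Submission
  imports Defs
begin

theorem lemma10p1:
  fixes T a :: real and y :: "real \<Rightarrow> real" and F :: "real \<Rightarrow> real \<Rightarrow> real"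
    and \<mu> :: "real \<Rightarrow> real"
  assumes T_pos: "T > 0" and a_nonneg: "a \<ge> 0"
    and y_nonneg: "\<And>t. t \<in> {0..<T} \<Longrightarrow> y t \<ge> 0"
    and y_cont: "continuous_on {0..<T} y"
    and y_mono: "mono_on {0..<T} y"
    and F_nonneg: "\<And>p x. p \<ge> 2 \<Longrightarrow> x \<ge> 0 \<Longrightarrow> F p x \<ge> 0"
    and F_cont: "continuous_on ({2..} \<times> {0..}) (\<lambda>(p, x). F p x)"
    and F_mono: "\<And>p. p \<ge> 2 \<Longrightarrow> mono_on {0..} (F p)"
    and ineq: "\<And>t0 t1 p. 0 < t0 \<Longrightarrow> t0 < t1 \<Longrightarrow> t1 < T \<Longrightarrow> p \<ge> 2 \<Longrightarrow>
       y t1 - y t0 \<le> a * (t1 - t0) + integral {t0..t1} (\<lambda>s. F p (y s))"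
    and mu_cont: "continuous_on {0..} \<mu>"
    and mu_nonneg: "\<And>x. x \<ge> 0 \<Longrightarrow> \<mu> x \<ge> 0"
    and mu_bound: "\<And>x. x \<ge> 0 \<Longrightarrow> \<exists>px \<ge> 2. F px x \<le> \<mu> x"
  shows "\<forall>t. 0 < t \<and> t < T \<longrightarrow> y t - y 0 \<le> a * t + integral {0..t} (\<lambda>s. \<mu> (y s))"
proof -
  define h where "h = (\<lambda>s. \<mu> (y s))"
  define G where "G = (\<lambda>t. y t - a * t - integral {0..t} h)"
  have hcont: "continuous_on {r..t} h" if "0 \<le> r" "t < T" for r t
  proof -
    have yc: "continuous_on {r..t} y"
      using y_cont by (rule continuous_on_subset) (use that in auto)
    have "y ` {r..t} \<subseteq> {0..}" using y_nonneg that by auto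
    then show ?thesis unfolding h_def
      by (rule continuous_on_compose2[OF mu_cont yc])
  qed
  have hint: "h integrable_on {r..t}" if "0 \<le> r" "t < T" for r t
    using hcont[OF that] by (rule integrable_continuous_interval)
  have L: "G v - G u \<le> e * (v - u)"
    if uv: "0 < u" "u < v" "v < T" and hb: "\<And>s. s \<in> {u..v} \<Longrightarrow> \<mu> (y v) - e \<le> h s" for u v e
  proof -
    have yv0: "y v \<ge> 0" using y_nonneg uv by auto
    obtain p where p: "p \<ge> 2" "F p (y v) \<le> \<mu> (y v)" using mu_bound[OF yv0] by blast
    have i1: "y v - y u \<le> a * (v - u) + integral {u..v} (\<lambda>s. F p (y s))"
      using ineq[OF uv p(1)] .
    have Fle: "F p (y s) \<le> F p (y v)" if "s \<in> {u..v}" for s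
    proof -
      have "y s \<le> y v" using y_mono that uv by (auto intro: mono_onD)
      moreover have "y s \<ge> 0" using y_nonneg that uv by auto
      ultimately show ?thesis using F_mono[OF p(1)] yv0 by (auto intro: mono_onD)
    qed
    have i2: "integral {u..v} (\<lambda>s. F p (y s)) \<le> (v - u) * F p (y v)"
    proof (cases "(\<lambda>s. F p (y s)) integrable_on {u..v}")
      case True
      have "integral {u..v} (\<lambda>s. F p (y s)) \<le> integral {u..v} (\<lambda>s. F p (y v))"
        by (rule integral_le[OF True]) (auto intro: Fle)
      then show ?thesis using uv by simp
    next
      case False
      then show ?thesis using F_nonneg[OF p(1) yv0] uv by (simp add: not_integrable_integral)
    qed
    have i3: "integral {u..v} (\<lambda>s. \<mu> (y v) - e) \<le> integral {u..v} h"
      by (rule integral_le) (auto intro: hb hint uv less_imp_le)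
    have i3': "(v - u) * (\<mu> (y v) - e) \<le> integral {u..v} h" using i3 uv by simp
    have comb: "integral {0..u} h + integral {u..v} h = integral {0..v} h"
      by (rule Henstock_Kurzweil_Integration.integral_combine) (use uv hint in auto)
    have "(v - u) * F p (y v) \<le> (v - u) * \<mu> (y v)"
      using p(2) uv by (intro mult_left_mono) auto
    then show ?thesis using i1 i2 i3' comb unfolding G_def by (simp add: algebra_simps)
  qed
  have step1: "G t1 \<le> G t0" if tt: "0 < t0" "t0 < t1" "t1 < T" for t0 t1
  proof (rule ccontr)
    assume "\<not> G t1 \<le> G t0"
    then have pos: "G t1 - G t0 > 0" by simp
    define e where "e = (G t1 - G t0) / (2 * (t1 - t0))"
    have e0: "e > 0" using pos tt unfolding e_def by simp
    have "uniformly_continuous_on {t0..t1} h"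
      using hcont[of t0 t1] tt by (intro compact_uniformly_continuous) auto
    then obtain d where d0: "d > 0" and
      dU: "\<And>x x'. x \<in> {t0..t1} \<Longrightarrow> x' \<in> {t0..t1} \<Longrightarrow> dist x' x < d \<Longrightarrow> dist (h x') (h x) < e"
      using e0 unfolding uniformly_continuous_on_def by metis
    obtain n :: nat where n: "real n > (t1 - t0) / d" using reals_Archimedean2 by blast
    have npos: "real n > 0" using n tt d0 by (smt (verit) divide_pos_pos)
    define hh where "hh = (t1 - t0) / real n"
    have hh0: "hh > 0" using npos tt unfolding hh_def by simp
    have hhd: "hh < d" using n npos d0 tt unfolding hh_def by (simp add: field_simps)
    have nhh: "real n * hh = t1 - t0" using npos unfolding hh_def by simp
    have "\<forall>k\<le>n. G (t0 + real k * hh) - G t0 \<le> e * (real k * hh)"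
    proof (intro allI impI)
      fix k assume "k \<le> n"
      then show "G (t0 + real k * hh) - G t0 \<le> e * (real k * hh)"
      proof (induction k)
        case 0 then show ?case by simp
      next
        case (Suc k)
        define u where "u = t0 + real k * hh"
        define v where "v = t0 + real (Suc k) * hh"
        have kle: "real (Suc k) * hh \<le> real n * hh"
          using Suc.prems hh0 by (intro mult_right_mono) auto
        have vu: "v = u + hh" unfolding u_def v_def by (simp add: algebra_simps)
        have u0: "u \<ge> t0" unfolding u_def using hh0 by simp
        have v1: "v \<le> t1" unfolding v_def using kle nhh by simp
        have "G v - G u \<le> e * (v - u)"
        proof (rule L)
          show "0 < u" "u < v" "v < T" using u0 vu hh0 v1 tt by auto
          fix s assume s: "s \<in> {u..v}"
          have "dist (h s) (h v) < e"
            using s u0 v1 vu hhd by (intro dU) (auto simp: dist_real_def)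
          then show "\<mu> (y v) - e \<le> h s" unfolding h_def dist_real_def by simp
        qed
        moreover have "G u - G t0 \<le> e * (real k * hh)" using Suc by (simp add: u_def)
        ultimately show ?case unfolding v_def[symmetric] using vu u_def
          by (simp add: algebra_simps)
      qed
    qed
    then have "G (t0 + real n * hh) - G t0 \<le> e * (real n * hh)" by simp
    then have "G t1 - G t0 \<le> e * (t1 - t0)" using nhh by simp
    also have "\<dots> = (G t1 - G t0) / 2" unfolding e_def using tt by (simp add: field_simps)
    finally show False using pos by simp
  qed
  show ?thesis
  proof (intro allI impI)
    fix t assume t: "0 < t \<and> t < T"
    have yc: "continuous_on {0..t} y"
      using y_cont by (rule continuous_on_subset) (use t in auto)
    have Gc: "continuous_on {0..t} G" unfolding G_def
      by (intro continuous_on_diff continuous_on_mult continuous_on_const continuous_on_id yc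
            indefinite_integral_continuous_1 hint) (use t in auto)
    then have "(G \<longlongrightarrow> G 0) (at 0 within {0..t})"
      using t by (simp add: continuous_on_def)
    then have lim: "(G \<longlongrightarrow> G 0) (at_right 0)"
      using t by (simp add: at_within_Icc_at_right)
    have ev: "eventually (\<lambda>s. G t \<le> G s) (at_right 0)"
      unfolding eventually_at_right_field
    proof (intro exI conjI allI impI)
      show "(0::real) < t" using t by simp
      fix s assume "0 < s" "s < t"
      then show "G t \<le> G s" using step1[of s t] t by auto
    qed
    have "G t \<le> G 0" by (rule tendsto_lowerbound[OF lim ev]) simp
    then show "y t - y 0 \<le> a * t + integral {0..t} (\<lambda>s. \<mu> (y s))"
      unfolding G_def h_def by simp
  qed
qed

end
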